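(* Let $\Phi$ be an atomic CSP on $n=|V|$ variables, $\pi$ an admissible projection scheme with parameter $\eta$ and $\kappa$ as in (A2), and $\epsilon\in(0,1/2)$. Let $V'\subseteq V$ and let $Y\in\prod_{v\in V'}Q_v$ be a partial assignment. Let $H'$ be a connected component of $H(Y)$ with $|\mathcal{C}(H')|\le 20\Delta\log(n\kappa/\epsilon)$. Let $X$ be obtained by sampling each $X(v)$ independently and uniformly from $\pi_v^{-1}(Y(v))$ for $v\in H'\cap V'$ and from $\Omega_v$ for $v\in H'\cap(V\setminus V')$. Then the probability that $X$ satisfies all constraints $C\in\mathcal{C}(H')$ is at least $(n\kappa/\epsilon)^{-\eta}$.
   Context: CSP notation: $\Phi=(V,(\Omega_v),\mathcal{C})$, constraints depending only on $\mathrm{vbl}(C)$; atomic: each $C$ has a unique violating assignment $\boldsymbol{C}\in\prod_{v\in\mathrm{vbl}(C)}\Omega_v$; degree $\Delta=\max_C|\{C':\mathrm{vbl}(C)\cap\mathrm{vbl}(C')\ne\emptyset\}|$; $\mu_\Phi$ uniform on satisfying assignments. Projection scheme $\pi_v:\Omega_v\to Q_v$ ($Q_v$ finite nonempty); $\mathbb{P}_\pi,\mu_\pi$ pushforwards of the uniform distribution on $\prod_v\Omega_v$ and of $\mu_\Phi$; $\boldsymbol{C}_\pi(v)=\pi_v(\boldsymbol{C}(v))$; $b(C)=\prod_{u\in\mathrm{vbl}(C)}|\pi_u^{-1}(\boldsymbol{C}_\pi(u))|^{-1}$, $b=\max_Cb(C)$; $q_{\mathrm{TV}}=\max_{v,Y}d_{\mathrm{TV}}(\mathbb{P}_\pi[\mathrm{value}(v)=\cdot],\mu_\pi[\mathrm{value}(v)=\cdot\mid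 Y^{-v}])$; $\overline{\mathrm{vbl}}(C)=\{v\in\mathrm{vbl}(C):|Q_v|>1\}$; $\zeta(C)=\max\{1,\max_{v\in\overline{\mathrm{vbl}}(C)}\min(\frac{(1-3b)^\Delta q_{\mathrm{TV}}}{\mathbb{P}_\pi[\mathrm{value}(v)=\boldsymbol{C}_\pi(v)]},2\Delta)\}$. Admissible with parameter $\eta\in(0,1/2)$: (A1) $b\le\eta/(300\Delta)$; (A2) there is $\kappa\ge4\log(3000\Delta)$, $\kappa\le K(\log\Delta+\log\max|Q_v|+\log\max|\mathrm{vbl}(C)|)$ ($K$ universal), with $|\overline{\mathrm{vbl}}(C)|^2\kappa^2\zeta(C)\prod_{v\in\overline{\mathrm{vbl}}(C)}((1-3b)^{-\Delta}\mathbb{P}_\pi[\mathrm{value}(v)=\boldsymbol{C}_\pi(v)]+e^{-\kappa/3})\le(60000\Delta)^{-2}$ for all $C$; (A3) for $v\in\mathrm{vbl}(C)\cap\mathrm{vbl}(C')$, $\mathbb{P}_\pi[\mathrm{value}(v)=\boldsymbol{C}_\pi(v)]$ and $\mathbb{P}_\pi[\mathrm{value}(v)=\boldsymbol{C}'_\pi(v)]$ are within a factor $2$; (A4) $\pi_v$ computable and fibres samplable in time $K\log|\Omega_v|$. For $Y\in\prod_{v\in V'}Q_v$: $\mathcal{C}(Y)$ = constraints $C$ with $Y(v)=\boldsymbol{C}_\pi(v)$ for all $v\in\mathrm{vbl}(C)\cap V'$; $H(Y)$ = graph on $V$, $u\ne v$ adjacent iff $u,v\in\mathrm{vbl}(C)$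 for some $C\in\mathcal{C}(Y)$; for a component $H'$, $\mathcal{C}(H')=\{C\in\mathcal{C}(Y):\mathrm{vbl}(C)\subseteq H'\}$. *)

theory Defs
  imports "HOL-Probability.Probability"
begin

(* A CSP is given by the variable set V, domains Omega v, the (finite) set Cs of
   constraints, the scope vbl C of each constraint, and (atomicity) the unique
   violating assignment viol C of each constraint. *)

definition atomic_csp ::
  "'v set \<Rightarrow> ('v \<Rightarrow> 'a set) \<Rightarrow> 'c set \<Rightarrow> ('c \<Rightarrow> 'v set) \<Rightarrow> ('c \<Rightarrow> 'v \<Rightarrow> 'a) \<Rightarrow> bool" where
  "atomic_csp V Omega Cs vbl viol \<longleftrightarrow>
     finite V \<and> (\<forall>v\<in>V. finite (Omega v) \<and> Omega v \<noteq> {}) \<and> finite Cs \<and>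
     (\<forall>C\<in>Cs. vbl C \<subseteq> V \<and> (\<forall>v\<in>vbl C. viol C v \<in> Omega v))"

definition violates :: "('c \<Rightarrow> 'v set) \<Rightarrow> ('c \<Rightarrow> 'v \<Rightarrow> 'a) \<Rightarrow> ('v \<Rightarrow> 'a) \<Rightarrow> 'c \<Rightarrow> bool" where
  "violates vbl viol \<sigma> C \<longleftrightarrow> (\<forall>v\<in>vbl C. \<sigma> v = viol C v)"

definition csp_degree :: "'c set \<Rightarrow> ('c \<Rightarrow> 'v set) \<Rightarrow> nat" where
  "csp_degree Cs vbl = Max (insert 1 ((\<lambda>C. card {C'\<in>Cs. vbl C \<inter> vbl C' \<noteq> {}}) ` Cs))"

definition sat_assignments ::
  "'v set \<Rightarrow> ('v \<Rightarrow> 'a set) \<Rightarrow> 'c set \<Rightarrow> ('c \<Rightarrow> 'v set) \<Rightarrow> ('c \<Rightarrow> 'v \<Rightarrow> 'a) \<Rightarrow> ('v \<Rightarrow> 'a) set" where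
  "sat_assignments V Omega Cs vbl viol =
     {\<sigma> \<in> PiE V Omega. \<forall>C\<in>Cs. \<not> violates vbl viol \<sigma> C}"

definition projection_scheme ::
  "'v set \<Rightarrow> ('v \<Rightarrow> 'a set) \<Rightarrow> ('v \<Rightarrow> 'q set) \<Rightarrow> ('v \<Rightarrow> 'a \<Rightarrow> 'q) \<Rightarrow> bool" where
  "projection_scheme V Omega Q prj \<longleftrightarrow>
     (\<forall>v\<in>V. finite (Q v) \<and> Q v \<noteq> {} \<and> prj v ` Omega v = Q v)"

definition fibre :: "('v \<Rightarrow> 'a set) \<Rightarrow> ('v \<Rightarrow> 'a \<Rightarrow> 'q) \<Rightarrow> 'v \<Rightarrow> 'q \<Rightarrow> 'a set" where
  "fibre Omega prj v q = {x \<in> Omega v. prj v x = q}"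

definition Ppi :: "('v \<Rightarrow> 'a set) \<Rightarrow> ('v \<Rightarrow> 'a \<Rightarrow> 'q) \<Rightarrow> 'v \<Rightarrow> 'q \<Rightarrow> real" where
  "Ppi Omega prj v q = real (card (fibre Omega prj v q)) / real (card (Omega v))"

definition bC :: "('v \<Rightarrow> 'a set) \<Rightarrow> ('v \<Rightarrow> 'a \<Rightarrow> 'q) \<Rightarrow> ('c \<Rightarrow> 'v set) \<Rightarrow> ('c \<Rightarrow> 'v \<Rightarrow> 'a) \<Rightarrow> 'c \<Rightarrow> real" where
  "bC Omega prj vbl viol C =
     (\<Prod>u\<in>vbl C. 1 / real (card (fibre Omega prj u (prj u (viol C u)))))"

definition bmax :: "('v \<Rightarrow> 'a set) \<Rightarrow> ('v \<Rightarrow> 'a \<Rightarrow> 'q) \<Rightarrow> 'c set \<Rightarrow> ('c \<Rightarrow> 'v set) \<Rightarrow> ('c \<Rightarrow> 'v \<Rightarrow> 'a) \<Rightarrow> real" where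
  "bmax Omega prj Cs vbl viol = Max (insert 0 (bC Omega prj vbl viol ` Cs))"

definition sat_matching ::
  "'v set \<Rightarrow> ('v \<Rightarrow> 'a set) \<Rightarrow> 'c set \<Rightarrow> ('c \<Rightarrow> 'v set) \<Rightarrow> ('c \<Rightarrow> 'v \<Rightarrow> 'a)
   \<Rightarrow> ('v \<Rightarrow> 'a \<Rightarrow> 'q) \<Rightarrow> 'v \<Rightarrow> ('v \<Rightarrow> 'q) \<Rightarrow> ('v \<Rightarrow> 'a) set" where
  "sat_matching V Omega Cs vbl viol prj v Y =
     {\<sigma> \<in> sat_assignments V Omega Cs vbl viol. \<forall>u\<in>V - {v}. prj u (\<sigma> u) = Y u}"

definition mu_cond ::
  "'v set \<Rightarrow> ('v \<Rightarrow> 'a set) \<Rightarrow> 'c set \<Rightarrow> ('c \<Rightarrow> 'v set) \<Rightarrow> ('c \<Rightarrow> 'v \<Rightarrow> 'a)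
   \<Rightarrow> ('v \<Rightarrow> 'a \<Rightarrow> 'q) \<Rightarrow> 'v \<Rightarrow> ('v \<Rightarrow> 'q) \<Rightarrow> 'q \<Rightarrow> real" where
  "mu_cond V Omega Cs vbl viol prj v Y q =
     real (card {\<sigma> \<in> sat_matching V Omega Cs vbl viol prj v Y. prj v (\<sigma> v) = q})
     / real (card (sat_matching V Omega Cs vbl viol prj v Y))"

(* q_TV: maximum over v \<in> V and projected assignments Y on V - {v} with
   mu_pi(Y^{-v}) > 0 of the total variation distance between the marginal of
   P_pi at v and the conditional marginal of mu_pi at v given Y^{-v}.
   (0 is inserted only to make Max well-defined; TV distances are >= 0.) *)
definition qTV ::
  "'v set \<Rightarrow> ('v \<Rightarrow> 'a set) \<Rightarrow> 'c set \<Rightarrow> ('c \<Rightarrow> 'v set) \<Rightarrow> ('c \<Rightarrow> 'v \<Rightarrow> 'a)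
   \<Rightarrow> ('v \<Rightarrow> 'q set) \<Rightarrow> ('v \<Rightarrow> 'a \<Rightarrow> 'q) \<Rightarrow> real" where
  "qTV V Omega Cs vbl viol Q prj =
     Max (insert 0
       {(1/2) * (\<Sum>q\<in>Q v. \<bar>Ppi Omega prj v q - mu_cond V Omega Cs vbl viol prj v Y q\<bar>) | v Y.
          v \<in> V \<and> Y \<in> PiE (V - {v}) Q \<and> sat_matching V Omega Cs vbl viol prj v Y \<noteq> {}})"

definition vbar :: "('v \<Rightarrow> 'q set) \<Rightarrow> ('c \<Rightarrow> 'v set) \<Rightarrow> 'c \<Rightarrow> 'v set" where
  "vbar Q vbl C = {v \<in> vbl C. card (Q v) > 1}"

definition zeta ::
  "'v set \<Rightarrow> ('v \<Rightarrow> 'a set) \<Rightarrow> 'c set \<Rightarrow> ('c \<Rightarrow> 'v set) \<Rightarrow> ('c \<Rightarrow> 'v \<Rightarrow> 'a)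
   \<Rightarrow> ('v \<Rightarrow> 'q set) \<Rightarrow> ('v \<Rightarrow> 'a \<Rightarrow> 'q) \<Rightarrow> 'c \<Rightarrow> real" where
  "zeta V Omega Cs vbl viol Q prj C =
     (let b = bmax Omega prj Cs vbl viol; \<Delta> = csp_degree Cs vbl;
          q = qTV V Omega Cs vbl viol Q prj in
      Max (insert 1 ((\<lambda>v. min ((1 - 3*b) ^ \<Delta> * q / Ppi Omega prj v (prj v (viol C v))) (2 * real \<Delta>))
                      ` vbar Q vbl C)))"

(* Admissibility with parameter eta, witnessed by kappa, for the universal
   constant K of (A2).  (A4) is a computational-complexity requirement and is
   not represented. *)
definition admissible ::
  "'v set \<Rightarrow> ('v \<Rightarrow> 'a set) \<Rightarrow> 'c set \<Rightarrow> ('c \<Rightarrow> 'v set) \<Rightarrow> ('c \<Rightarrow> 'v \<Rightarrow> 'a)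
   \<Rightarrow> ('v \<Rightarrow> 'q set) \<Rightarrow> ('v \<Rightarrow> 'a \<Rightarrow> 'q) \<Rightarrow> real \<Rightarrow> real \<Rightarrow> real \<Rightarrow> bool" where
  "admissible V Omega Cs vbl viol Q prj K \<eta> \<kappa> \<longleftrightarrow>
     (let b = bmax Omega prj Cs vbl viol; \<Delta> = real (csp_degree Cs vbl);
          P = (\<lambda>C v. Ppi Omega prj v (prj v (viol C v))) in
       0 < \<eta> \<and> \<eta> < 1/2 \<and>
       \<comment> \<open>(A1)\<close>
       b \<le> \<eta> / (300 * \<Delta>) \<and>
       \<comment> \<open>(A2)\<close>
       \<kappa> \<ge> 4 * ln (3000 * \<Delta>) \<and>
       \<kappa> \<le> K * (ln \<Delta> + ln (real (Max (insert 1 ((\<lambda>v. card (Q v)) ` V))))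
                    + ln (real (Max (insert 1 ((\<lambda>C. card (vbl C)) ` Cs))))) \<and>
       (\<forall>C\<in>Cs. (real (card (vbar Q vbl C)))^2 * \<kappa>^2 * zeta V Omega Cs vbl viol Q prj C *
           (\<Prod>v\<in>vbar Q vbl C. P C v / (1 - 3*b) ^ csp_degree Cs vbl + exp (-\<kappa>/3))
         \<le> 1 / (60000 * \<Delta>)^2) \<and>
       \<comment> \<open>(A3)\<close>
       (\<forall>C\<in>Cs. \<forall>C'\<in>Cs. \<forall>v\<in>vbl C \<inter> vbl C'. P C v \<le> 2 * P C' v \<and> P C' v \<le> 2 * P C v))"

definition consY :: "'c set \<Rightarrow> ('c \<Rightarrow> 'v set) \<Rightarrow> ('c \<Rightarrow> 'v \<Rightarrow> 'a) \<Rightarrow> ('v \<Rightarrow> 'a \<Rightarrow> 'q)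
   \<Rightarrow> 'v set \<Rightarrow> ('v \<Rightarrow> 'q) \<Rightarrow> 'c set" where
  "consY Cs vbl viol prj V' Y = {C \<in> Cs. \<forall>v\<in>vbl C \<inter> V'. Y v = prj v (viol C v)}"

definition HY_edges :: "'v set \<Rightarrow> 'c set \<Rightarrow> ('c \<Rightarrow> 'v set) \<Rightarrow> ('c \<Rightarrow> 'v \<Rightarrow> 'a) \<Rightarrow> ('v \<Rightarrow> 'a \<Rightarrow> 'q)
   \<Rightarrow> 'v set \<Rightarrow> ('v \<Rightarrow> 'q) \<Rightarrow> ('v \<times> 'v) set" where
  "HY_edges V Cs vbl viol prj V' Y =
     {(u, w). u \<in> V \<and> w \<in> V \<and> u \<noteq> w \<and> (\<exists>C\<in>consY Cs vbl viol prj V' Y. u \<in> vbl C \<and> w \<in> vbl C)}"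

definition is_component_HY :: "'v set \<Rightarrow> 'c set \<Rightarrow> ('c \<Rightarrow> 'v set) \<Rightarrow> ('c \<Rightarrow> 'v \<Rightarrow> 'a) \<Rightarrow> ('v \<Rightarrow> 'a \<Rightarrow> 'q)
   \<Rightarrow> 'v set \<Rightarrow> ('v \<Rightarrow> 'q) \<Rightarrow> 'v set \<Rightarrow> bool" where
  "is_component_HY V Cs vbl viol prj V' Y H' \<longleftrightarrow>
     (\<exists>v\<in>V. H' = {u \<in> V. (v, u) \<in> (HY_edges V Cs vbl viol prj V' Y)\<^sup>*})"

definition consH :: "'c set \<Rightarrow> ('c \<Rightarrow> 'v set) \<Rightarrow> ('c \<Rightarrow> 'v \<Rightarrow> 'a) \<Rightarrow> ('v \<Rightarrow> 'a \<Rightarrow> 'q)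
   \<Rightarrow> 'v set \<Rightarrow> ('v \<Rightarrow> 'q) \<Rightarrow> 'v set \<Rightarrow> 'c set" where
  "consH Cs vbl viol prj V' Y H' = {C \<in> consY Cs vbl viol prj V' Y. vbl C \<subseteq> H'}"

definition sample_dom :: "('v \<Rightarrow> 'a set) \<Rightarrow> ('v \<Rightarrow> 'a \<Rightarrow> 'q) \<Rightarrow> 'v set \<Rightarrow> ('v \<Rightarrow> 'q) \<Rightarrow> 'v \<Rightarrow> 'a set" where
  "sample_dom Omega prj V' Y v = (if v \<in> V' then fibre Omega prj v (Y v) else Omega v)"

definition prob_X_sat :: "('v \<Rightarrow> 'a set) \<Rightarrow> 'c set \<Rightarrow> ('c \<Rightarrow> 'v set) \<Rightarrow> ('c \<Rightarrow> 'v \<Rightarrow> 'a) \<Rightarrow> ('v \<Rightarrow> 'a \<Rightarrow> 'q)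
   \<Rightarrow> 'v set \<Rightarrow> ('v \<Rightarrow> 'q) \<Rightarrow> 'v set \<Rightarrow> real" where
  "prob_X_sat Omega Cs vbl viol prj V' Y H' =
     measure_pmf.prob (pmf_of_set (PiE H' (sample_dom Omega prj V' Y)))
       {X. \<forall>C\<in>consH Cs vbl viol prj V' Y H'. \<not> violates vbl viol X C}"

end

theory Submission
  imports Defs
begin

lemma lll_step:
  fixes Om :: "'x set" and A :: "'c \<Rightarrow> 'x set" and nb :: "'c \<Rightarrow> 'c \<Rightarrow> bool" and p :: real
  assumes fin: "finite Om" "finite T"
    and indep: "\<And>C S. C \<in> T \<Longrightarrow> S \<subseteq> T \<Longrightarrow> (\<forall>D\<in>S. \<not> nb C D) \<Longrightarrow>
        real (card {x\<in>Om. x \<in> A C \<and> (\<forall>D\<in>S. x \<notin> A D)}) \<le> p * card {x\<in>Om. \<forall>D\<in>S. x \<notin> A D}"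
    and deg: "\<And>C. C \<in> T \<Longrightarrow> card {D\<in>T. nb C D} \<le> d"
    and p: "0 \<le> p" "4 * p * real d \<le> 1"
  shows "S \<subseteq> T \<Longrightarrow> C \<in> T \<Longrightarrow> C \<notin> S \<Longrightarrow>
     real (card {x\<in>Om. x \<in> A C \<and> (\<forall>D\<in>S. x \<notin> A D)}) \<le> 2 * p * card {x\<in>Om. \<forall>D\<in>S. x \<notin> A D}"
proof (induction "card S" arbitrary: S C rule: less_induct)
  case less
  define N where "N = (\<lambda>S. card {x\<in>Om. \<forall>D\<in>S. x \<notin> A D})"
  define E where "E = (\<lambda>C S. card {x\<in>Om. x \<in> A C \<and> (\<forall>D\<in>S. x \<notin> A D)})"
  define S1 where "S1 = {D\<in>S. nb C D}"
  define S2 where "S2 = S - S1"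
  have finS: "finite S" using less.prems fin(2) finite_subset by blast
  have S2S: "S2 \<subseteq> S" unfolding S2_def by auto
  have "E C S \<le> E C S2" unfolding E_def
    by (rule card_mono) (use fin S2S in auto)
  also have "real (E C S2) \<le> p * N S2" unfolding E_def N_def
    by (rule indep) (use less.prems S2S in \<open>auto simp: S2_def S1_def\<close>)
  finally have e1: "real (E C S) \<le> p * N S2" by simp
  show ?case
  proof (cases "S1 = {}")
    case True
    then have "S2 = S" unfolding S2_def by auto
    have "p * N S \<le> 2 * p * N S" using p by simp
    then show ?thesis using e1 \<open>S2 = S\<close> unfolding E_def N_def by simp
  next
    case False
    have "S2 \<subset> S" using False unfolding S2_def S1_def by auto
    then have lt: "card S2 < card S" by (rule psubset_card_mono[OF finS])
    have IH: "real (E D S2) \<le> 2 * p * N S2" if "D \<in> S1" for D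
      unfolding E_def N_def
      by (rule less.hyps[OF lt]) (use that less.prems in \<open>auto simp: S2_def S1_def\<close>)
    have sub: "{x\<in>Om. \<forall>D\<in>S2. x \<notin> A D} \<subseteq> {x\<in>Om. \<forall>D\<in>S. x \<notin> A D} \<union>
        (\<Union>D\<in>S1. {x\<in>Om. x \<in> A D \<and> (\<forall>D\<in>S2. x \<notin> A D)})"
      unfolding S2_def by auto
    have finS1: "finite S1" using finS unfolding S1_def by auto
    have c1: "N S2 \<le> card ({x\<in>Om. \<forall>D\<in>S. x \<notin> A D} \<union>
        (\<Union>D\<in>S1. {x\<in>Om. x \<in> A D \<and> (\<forall>D\<in>S2. x \<notin> A D)}))"
      unfolding N_def by (rule card_mono) (use fin finS1 sub in auto)
    have c2: "card ({x\<in>Om. \<forall>D\<in>S. x \<notin> A D} \<union>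
        (\<Union>D\<in>S1. {x\<in>Om. x \<in> A D \<and> (\<forall>D\<in>S2. x \<notin> A D)})) \<le> N S + card (\<Union>D\<in>S1. {x\<in>Om. x \<in> A D \<and> (\<forall>D\<in>S2. x \<notin> A D)})"
      unfolding N_def by (rule card_Un_le)
    have c3: "card (\<Union>D\<in>S1. {x\<in>Om. x \<in> A D \<and> (\<forall>D\<in>S2. x \<notin> A D)}) \<le> (\<Sum>D\<in>S1. E D S2)"
      unfolding E_def by (rule card_UN_le[OF finS1])
    have "N S2 \<le> N S + (\<Sum>D\<in>S1. E D S2)" using c1 c2 c3 by linarith
    then have "real (N S2) \<le> real (N S + (\<Sum>D\<in>S1. E D S2))" by linarith
    then have "real (N S2) \<le> N S + (\<Sum>D\<in>S1. real (E D S2))" by simp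
    also have "(\<Sum>D\<in>S1. real (E D S2)) \<le> (\<Sum>D\<in>S1. 2 * p * N S2)"
      by (rule sum_mono) (use IH in auto)
    also have "\<dots> = real (card S1) * (2 * p * N S2)" by simp
    also have "card S1 \<le> d"
    proof -
      have "S1 \<subseteq> {D\<in>T. nb C D}" using less.prems unfolding S1_def by auto
      then have "card S1 \<le> card {D\<in>T. nb C D}" by (rule card_mono[rotated]) (use fin in auto)
      then show ?thesis using deg less.prems by (meson order_trans)
    qed
    then have "real (card S1) * (2 * p * N S2) \<le> real d * (2 * p * N S2)"
      by (intro mult_right_mono) (use p in auto)
    finally have "real (N S2) \<le> N S + real d * (2 * p * N S2)" by simp
    moreover have "real d * (2 * p * N S2) \<le> N S2 / 2"
    proof -
      have "real d * (2 * p * N S2) = (2 * p * real d) * N S2" by simp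
      also have "\<dots> \<le> (1/2) * N S2" by (rule mult_right_mono) (use p in auto)
      finally show ?thesis by simp
    qed
    ultimately have "real (N S2) \<le> 2 * N S" by linarith
    then have "p * N S2 \<le> p * (2 * N S)" using p by (intro mult_left_mono) auto
    with e1 show ?thesis unfolding E_def N_def by simp
  qed
qed

lemma lll_prod:
  fixes Om :: "'x set" and A :: "'c \<Rightarrow> 'x set" and nb :: "'c \<Rightarrow> 'c \<Rightarrow> bool" and p :: real
  assumes fin: "finite Om" "finite T"
    and indep: "\<And>C S. C \<in> T \<Longrightarrow> S \<subseteq> T \<Longrightarrow> (\<forall>D\<in>S. \<not> nb C D) \<Longrightarrow>
        real (card {x\<in>Om. x \<in> A C \<and> (\<forall>D\<in>S. x \<notin> A D)}) \<le> p * card {x\<in>Om. \<forall>D\<in>S. x \<notin> A D}"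
    and deg: "\<And>C. C \<in> T \<Longrightarrow> card {D\<in>T. nb C D} \<le> d"
    and p: "0 \<le> p" "4 * p * real d \<le> 1" "2 * p \<le> 1"
  shows "(1 - 2 * p) ^ card T * card Om \<le> card {x\<in>Om. \<forall>D\<in>T. x \<notin> A D}"
proof -
  have "S \<subseteq> T \<Longrightarrow> (1 - 2 * p) ^ card S * card Om \<le> card {x\<in>Om. \<forall>D\<in>S. x \<notin> A D}" for S
  proof (induction S rule: infinite_finite_induct)
    case (infinite S0)
    then show ?case using fin finite_subset by blast
  next
    case empty
    then show ?case by simp
  next
    case (insert C S)
    have st: "real (card {x\<in>Om. x \<in> A C \<and> (\<forall>D\<in>S. x \<notin> A D)}) \<le> 2 * p * card {x\<in>Om. \<forall>D\<in>S. x \<notin> A D}"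
      by (rule lll_step[OF fin indep deg p(1,2)]) (use insert in auto)
    have split: "{x\<in>Om. \<forall>D\<in>S. x \<notin> A D} = {x\<in>Om. \<forall>D\<in>insert C S. x \<notin> A D} \<union> {x\<in>Om. x \<in> A C \<and> (\<forall>D\<in>S. x \<notin> A D)}"
      by auto
    have "card {x\<in>Om. \<forall>D\<in>S. x \<notin> A D} = card {x\<in>Om. \<forall>D\<in>insert C S. x \<notin> A D} + card {x\<in>Om. x \<in> A C \<and> (\<forall>D\<in>S. x \<notin> A D)}"
      unfolding split by (rule card_Un_disjoint) (use fin in auto)
    then have "(1 - 2*p) * card {x\<in>Om. \<forall>D\<in>S. x \<notin> A D} \<le> card {x\<in>Om. \<forall>D\<in>insert C S. x \<notin> A D}"
      using st by (simp add: algebra_simps)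
    moreover have "(1 - 2 * p) * ((1 - 2 * p) ^ card S * card Om) \<le> (1 - 2*p) * card {x\<in>Om. \<forall>D\<in>S. x \<notin> A D}"
      by (rule mult_left_mono) (use insert p in auto)
    ultimately show ?case using insert by simp
  qed
  then show ?thesis by simp
qed


lemma indep_count:
  fixes H W :: "'v set" and Dm :: "'v \<Rightarrow> 'a set" and z :: "'v \<Rightarrow> 'a" and P :: "('v \<Rightarrow> 'a) \<Rightarrow> bool"
  assumes finH: "finite H" and WH: "W \<subseteq> H" and finD: "\<And>v. v \<in> H \<Longrightarrow> finite (Dm v)"
    and Pinv: "\<And>X X'. (\<forall>v\<in>H - W. X v = X' v) \<Longrightarrow> P X \<Longrightarrow> P X'"
  shows "card {X\<in>PiE H Dm. (\<forall>v\<in>W. X v = z v) \<and> P X} * (\<Prod>v\<in>W. card (Dm v))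
          \<le> card {X\<in>PiE H Dm. P X}"
proof -
  define A where "A = {X\<in>PiE H Dm. (\<forall>v\<in>W. X v = z v) \<and> P X}"
  define f where "f = (\<lambda>(X::'v\<Rightarrow>'a, y::'v\<Rightarrow>'a). (\<lambda>v. if v \<in> W then y v else X v))"
  have finW: "finite W" using finH WH finite_subset by blast
  have finPi: "finite (PiE H Dm)" by (rule finite_PiE[OF finH]) (use finD in auto)
  have "card A * (\<Prod>v\<in>W. card (Dm v)) = card (A \<times> PiE W Dm)"
    by (simp add: card_cartesian_product card_PiE[OF finW])
  also have "\<dots> \<le> card {X\<in>PiE H Dm. P X}"
  proof (rule card_inj_on_le)
    show "inj_on f (A \<times> PiE W Dm)"
      unfolding inj_on_def
    proof (intro ballI impI)
      fix u w
      assume a0: "u \<in> A \<times> PiE W Dm" "w \<in> A \<times> PiE W Dm" and e0: "f u = f w"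
      obtain X y where u: "u = (X, y)" by (cases u)
      obtain X' y' where w: "w = (X', y')" by (cases w)
      have a: "(X, y) \<in> A \<times> PiE W Dm" "(X', y') \<in> A \<times> PiE W Dm" using a0 u w by auto
      have e: "f (X, y) = f (X', y')" using e0 u w by simp
      have "X = X'"
      proof
        fix v show "X v = X' v"
          using a fun_cong[OF e, of v] unfolding A_def f_def by (cases "v \<in> W") auto
      qed
      moreover have "y = y'"
      proof
        fix v show "y v = y' v"
          using a fun_cong[OF e, of v] unfolding A_def f_def by (cases "v \<in> W") (auto simp: PiE_def extensional_def)
      qed
      ultimately show "u = w" using u w by simp
    qed
    show "f ` (A \<times> PiE W Dm) \<subseteq> {X\<in>PiE H Dm. P X}"
    proof (rule image_subsetI)
      fix u assume a0: "u \<in> A \<times> PiE W Dm"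
      obtain X y where u: "u = (X, y)" by (cases u)
      have a: "X \<in> A" "y \<in> PiE W Dm" using a0 u by auto
      have "f (X, y) \<in> PiE H Dm" using a WH unfolding A_def f_def
        by (auto simp: PiE_def Pi_def extensional_def)
      moreover have "P (f (X, y))"
        by (rule Pinv[of X]) (use a in \<open>auto simp: A_def f_def\<close>)
      ultimately show "f u \<in> {X\<in>PiE H Dm. P X}" using u by simp
    qed
    show "finite {X\<in>PiE H Dm. P X}" using finPi by simp
  qed
  finally show ?thesis unfolding A_def .
qed

lemma final_numeric:
  fixes b \<eta> L :: real and m d :: nat
  assumes b0: "0 \<le> b" and bb: "b \<le> \<eta> / (300 * real d)" and d1: "d \<ge> 1"
    and eta: "0 < \<eta>" "\<eta> < 1/2" and L: "L \<ge> 0" and m: "real m \<le> 20 * real d * L"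
  shows "exp (- \<eta> * L) \<le> (1 - 2 * b) ^ m"
proof -
  have bd: "b * d \<le> \<eta> / 300" using bb d1 by (simp add: field_simps)
  have b4: "2 * b \<le> 1/2"
  proof -
    have "b \<le> b * d" using b0 d1 by (simp add: mult_le_cancel_left1)
    then show ?thesis using bd eta by linarith
  qed
  have ln1: "- (2*b) - 2 * (2*b)^2 \<le> ln (1 - 2*b)"
    by (rule ln_one_minus_pos_lower_bound) (use b0 b4 in auto)
  have "(2*b)^2 \<le> (2*b) * (1/2)" unfolding power2_eq_square
    by (rule mult_left_mono) (use b0 b4 in auto)
  then have ln2: "- (4*b) \<le> ln (1 - 2*b)" using ln1 by linarith
  have "4 * b * m \<le> 4 * b * (20 * real d * L)" using m b0 by (intro mult_left_mono) auto
  also have "\<dots> = 80 * (b * d) * L" by simp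
  also have "\<dots> \<le> 80 * (\<eta>/300) * L" using bd L by (intro mult_right_mono) auto
  also have "\<dots> \<le> \<eta> * L" using eta L by (intro mult_right_mono) auto
  finally have "- \<eta> * L \<le> real m * (- (4*b))" by (simp add: algebra_simps)
  also have "\<dots> \<le> real m * ln (1 - 2*b)" using ln2 by (intro mult_left_mono) auto
  finally have "exp (- \<eta> * L) \<le> exp (real m * ln (1 - 2*b))" by simp
  also have "\<dots> = (1 - 2*b) ^ m"
    using b4 by (subst exp_of_nat_mult) simp
  finally show ?thesis .
qed

theorem proposition4p7:
  fixes V :: "'v set" and Omega :: "'v \<Rightarrow> 'a set" and Cs :: "'c set"
    and vbl :: "'c \<Rightarrow> 'v set" and viol :: "'c \<Rightarrow> 'v \<Rightarrow> 'a"
    and Q :: "'v \<Rightarrow> 'q set" and prj :: "'v \<Rightarrow> 'a \<Rightarrow> 'q"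
    and K \<eta> \<kappa> \<epsilon> :: real and V' :: "'v set" and Y :: "'v \<Rightarrow> 'q" and H' :: "'v set"
  assumes csp: "atomic_csp V Omega Cs vbl viol"
    and prjs: "projection_scheme V Omega Q prj"
    and adm: "admissible V Omega Cs vbl viol Q prj K \<eta> \<kappa>"
    and eps: "0 < \<epsilon>" "\<epsilon> < 1/2"
    and V': "V' \<subseteq> V"
    and Y: "Y \<in> PiE V' Q"
    and comp: "is_component_HY V Cs vbl viol prj V' Y H'"
    and small: "real (card (consH Cs vbl viol prj V' Y H'))
                  \<le> 20 * real (csp_degree Cs vbl) * ln (real (card V) * \<kappa> / \<epsilon>)"
  shows "prob_X_sat Omega Cs vbl viol prj V' Y H' \<ge> (real (card V) * \<kappa> / \<epsilon>) powr (-\<eta>)"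
proof -
  define b where "b = bmax Omega prj Cs vbl viol"
  define d where "d = csp_degree Cs vbl"
  define Dm where "Dm = sample_dom Omega prj V' Y"
  define Om where "Om = PiE H' Dm"
  define T where "T = consH Cs vbl viol prj V' Y H'"
  define A where "A = (\<lambda>C. {X. violates vbl viol X C})"
  define N where "N = real (card V) * \<kappa> / \<epsilon>"
  have finV: "finite V" and finOm: "\<And>v. v \<in> V \<Longrightarrow> finite (Omega v) \<and> Omega v \<noteq> {}"
    and finCs: "finite Cs" and csC: "\<And>C. C \<in> Cs \<Longrightarrow> vbl C \<subseteq> V \<and> (\<forall>v\<in>vbl C. viol C v \<in> Omega v)"
    using csp unfolding atomic_csp_def by auto
  have adm': "0 < \<eta>" "\<eta> < 1/2" "b \<le> \<eta> / (300 * real d)" "\<kappa> \<ge> 4 * ln (3000 * real d)"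
    using adm unfolding admissible_def Let_def b_def d_def by auto
  have d1: "d \<ge> 1" unfolding d_def csp_degree_def
    by (rule Max_ge) (use finCs in auto)
  have b0: "b \<ge> 0" unfolding b_def bmax_def
    by (rule Max_ge) (use finCs in auto)
  have bC: "bC Omega prj vbl viol C \<le> b" if "C \<in> Cs" for C unfolding b_def bmax_def
    by (rule Max_ge) (use finCs that in auto)
  have degC: "card {C'\<in>Cs. vbl C \<inter> vbl C' \<noteq> {}} \<le> d" if "C \<in> Cs" for C unfolding d_def csp_degree_def
    by (rule Max_ge) (use finCs that in auto)
  have kappa: "\<kappa> > 0"
  proof -
    have "ln (3000 * real d) > 0" using d1 by simp
    then show ?thesis using adm' by linarith
  qed
  obtain v0 where v0: "v0 \<in> V" "H' = {u \<in> V. (v0, u) \<in> (HY_edges V Cs vbl viol prj V' Y)\<^sup>*}"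
    using comp unfolding is_component_HY_def by blast
  have H'V: "H' \<subseteq> V" using v0 by auto
  have finH': "finite H'" using H'V finV finite_subset by blast
  have T_props: "C \<in> Cs \<and> vbl C \<subseteq> H' \<and> (\<forall>v\<in>vbl C \<inter> V'. Y v = prj v (viol C v))" if "C \<in> T" for C
    using that unfolding T_def consH_def consY_def by auto
  have finT: "finite T" using finCs T_props by (meson finite_subset subsetI)
  have finDm: "finite (Dm v)" if "v \<in> V" for v
    using finOm[OF that] unfolding Dm_def sample_dom_def fibre_def by auto
  have Dm_ne: "Dm v \<noteq> {}" if "v \<in> H'" for v
  proof (cases "v \<in> V'")
    case True
    then have "Y v \<in> Q v" using Y by auto
    moreover have "prj v ` Omega v = Q v" using prjs that H'V unfolding projection_scheme_def by auto
    ultimately obtain x where "x \<in> Omega v" "prj v x = Y v" by (metis imageE)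
    then show ?thesis using True unfolding Dm_def sample_dom_def fibre_def by auto
  next
    case False
    then show ?thesis using finOm that H'V unfolding Dm_def sample_dom_def by auto
  qed
  have finOmm: "finite Om" unfolding Om_def
    by (rule finite_PiE[OF finH']) (use finDm H'V in auto)
  have neOm: "Om \<noteq> {}" unfolding Om_def using Dm_ne by (simp add: PiE_eq_empty_iff)
  have fib: "fibre Omega prj v (prj v (viol C v)) \<subseteq> Dm v \<and> viol C v \<in> fibre Omega prj v (prj v (viol C v))"
    if "C \<in> T" "v \<in> vbl C" for C v
    using T_props[OF that(1)] csC that unfolding Dm_def sample_dom_def fibre_def by auto
  have pC: "(\<Prod>v\<in>vbl C. 1 / real (card (Dm v))) \<le> b" if "C \<in> T" for C
  proof -
    have "(\<Prod>v\<in>vbl C. 1 / real (card (Dm v))) \<le> (\<Prod>v\<in>vbl C. 1 / real (card (fibre Omega prj v (prj v (viol C v)))))"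
    proof (rule prod_mono, intro conjI)
      fix v assume v: "v \<in> vbl C"
      have vV: "v \<in> V" using T_props[OF that] H'V v by auto
      have ff: "finite (fibre Omega prj v (prj v (viol C v)))"
        using finDm[OF vV] fib[OF that v] finite_subset by blast
      have "0 < card (fibre Omega prj v (prj v (viol C v)))"
        using fib[OF that v] ff card_gt_0_iff by blast
      moreover have "card (fibre Omega prj v (prj v (viol C v))) \<le> card (Dm v)"
        using fib[OF that v] finDm[OF vV] card_mono by blast
      ultimately show "1 / real (card (Dm v)) \<le> 1 / real (card (fibre Omega prj v (prj v (viol C v))))"
        by (simp add: frac_le)
    qed simp
    also have "\<dots> = bC Omega prj vbl viol C" unfolding bC_def ..
    also have "\<dots> \<le> b" using bC T_props[OF that] by blast
    finally show ?thesis .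
  qed
  have indep: "real (card {x\<in>Om. x \<in> A C \<and> (\<forall>D\<in>S. x \<notin> A D)}) \<le> b * card {x\<in>Om. \<forall>D\<in>S. x \<notin> A D}"
    if C: "C \<in> T" and S: "S \<subseteq> T" and dis: "\<forall>D\<in>S. \<not> vbl C \<inter> vbl D \<noteq> {}" for C S
  proof -
    have cnt: "card {X\<in>PiE H' Dm. (\<forall>v\<in>vbl C. X v = viol C v) \<and> (\<forall>D\<in>S. \<not> violates vbl viol X D)} * (\<Prod>v\<in>vbl C. card (Dm v))
          \<le> card {X\<in>PiE H' Dm. (\<forall>D\<in>S. \<not> violates vbl viol X D)}"
    proof (rule indep_count[OF finH'])
      show "vbl C \<subseteq> H'" using T_props[OF C] by auto
      show "finite (Dm v)" if "v \<in> H'" for v using finDm H'V that by auto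
      fix X X' :: "'v \<Rightarrow> 'a"
      assume ag: "\<forall>v\<in>H' - vbl C. X v = X' v" and P: "\<forall>D\<in>S. \<not> violates vbl viol X D"
      show "\<forall>D\<in>S. \<not> violates vbl viol X' D"
      proof
        fix D assume D: "D \<in> S"
        have "\<forall>v\<in>vbl D. X v = X' v" using ag dis D T_props S by blast
        moreover obtain v where "v \<in> vbl D" "X v \<noteq> viol D v" using P D unfolding violates_def by blast
        ultimately show "\<not> violates vbl viol X' D" unfolding violates_def by force
      qed
    qed
    have ppos: "0 < (\<Prod>v\<in>vbl C. real (card (Dm v)))"
    proof (rule prod_pos)
      fix v assume v: "v \<in> vbl C"
      have vV: "v \<in> V" using T_props[OF C] H'V v by auto
      have vH: "v \<in> H'" using T_props[OF C] v by auto
      have "card (Dm v) > 0" using finDm[OF vV] Dm_ne[OF vH] by (simp add: card_gt_0_iff)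
      then show "0 < real (card (Dm v))" by simp
    qed
    define E where "E = real (card {x\<in>Om. x \<in> A C \<and> (\<forall>D\<in>S. x \<notin> A D)})"
    define M where "M = real (card {x\<in>Om. \<forall>D\<in>S. x \<notin> A D})"
    have "E * (\<Prod>v\<in>vbl C. real (card (Dm v))) \<le> M"
    proof -
      have s1: "{x\<in>Om. x \<in> A C \<and> (\<forall>D\<in>S. x \<notin> A D)} = {X\<in>PiE H' Dm. (\<forall>v\<in>vbl C. X v = viol C v) \<and> (\<forall>D\<in>S. \<not> violates vbl viol X D)}"
        unfolding Om_def A_def violates_def by simp
      have s2: "{x\<in>Om. \<forall>D\<in>S. x \<notin> A D} = {X\<in>PiE H' Dm. (\<forall>D\<in>S. \<not> violates vbl viol X D)}"
        unfolding Om_def A_def by simp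
      have "real (card {X\<in>PiE H' Dm. (\<forall>v\<in>vbl C. X v = viol C v) \<and> (\<forall>D\<in>S. \<not> violates vbl viol X D)} * (\<Prod>v\<in>vbl C. card (Dm v)))
          \<le> real (card {X\<in>PiE H' Dm. (\<forall>D\<in>S. \<not> violates vbl viol X D)})"
        using cnt by (simp only: of_nat_le_iff)
      then show ?thesis unfolding E_def M_def s1 s2 by (simp only: of_nat_mult of_nat_prod)
    qed
    then have "E \<le> M / (\<Prod>v\<in>vbl C. real (card (Dm v)))" using ppos by (simp add: field_simps)
    also have "\<dots> = M * (\<Prod>v\<in>vbl C. 1 / real (card (Dm v)))" by (simp add: prod_dividef)
    also have "\<dots> \<le> M * b" using pC[OF C] by (intro mult_left_mono) (auto simp: M_def)
    finally show ?thesis unfolding E_def M_def by (simp add: mult.commute)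
  qed
  have deg: "card {D\<in>T. vbl C \<inter> vbl D \<noteq> {}} \<le> d" if "C \<in> T" for C
  proof -
    have "card {D\<in>T. vbl C \<inter> vbl D \<noteq> {}} \<le> card {C'\<in>Cs. vbl C \<inter> vbl C' \<noteq> {}}"
      by (rule card_mono) (use finCs T_props in auto)
    then show ?thesis using degC T_props that by (meson order_trans)
  qed
  have bd: "b * d \<le> \<eta> / 300" using adm'(3) d1 by (simp add: field_simps)
  have bbd: "b \<le> b * d" using b0 d1 by (simp add: mult_le_cancel_left1)
  have p2: "4 * b * real d \<le> 1" using bd adm' by linarith
  have p3: "2 * b \<le> 1" using bd bbd adm' by linarith
  have main: "(1 - 2 * b) ^ card T * card Om \<le> card {x\<in>Om. \<forall>D\<in>T. x \<notin> A D}"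
    by (rule lll_prod[where nb = "\<lambda>C D. vbl C \<inter> vbl D \<noteq> {}", OF finOmm finT indep deg b0 p2 p3]) auto
  have prob: "prob_X_sat Omega Cs vbl viol prj V' Y H' = card {x\<in>Om. \<forall>D\<in>T. x \<notin> A D} / card Om"
  proof -
    have "prob_X_sat Omega Cs vbl viol prj V' Y H' = measure (measure_pmf (pmf_of_set Om)) {X. \<forall>C\<in>T. \<not> violates vbl viol X C}"
      unfolding prob_X_sat_def Om_def Dm_def T_def by (rule refl)
    also have "\<dots> = card (Om \<inter> {X. \<forall>C\<in>T. \<not> violates vbl viol X C}) / card Om"
      by (rule measure_pmf_of_set[OF neOm finOmm])
    also have "Om \<inter> {X. \<forall>C\<in>T. \<not> violates vbl viol X C} = {x\<in>Om. \<forall>D\<in>T. x \<notin> A D}"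
      unfolding A_def by blast
    finally show ?thesis .
  qed
  have "card Om > 0" using neOm finOmm by (simp add: card_gt_0_iff)
  then have cOm: "real (card Om) > 0" by simp
  have lower: "(1 - 2 * b) ^ card T \<le> prob_X_sat Omega Cs vbl viol prj V' Y H'"
    unfolding prob using main cOm by (simp add: field_simps)
  show ?thesis
  proof (cases "card V = 0")
    case True
    then have "(real (card V) * \<kappa> / \<epsilon>) powr (-\<eta>) = 0" by simp
    moreover have "(1 - 2 * b) ^ card T \<ge> 0" using p3 by simp
    ultimately show ?thesis using lower by linarith
  next
    case False
    then have Npos: "N > 0" unfolding N_def using kappa eps by simp
    have smallN: "real (card T) \<le> 20 * real d * ln N" using small unfolding T_def d_def N_def .
    have L: "ln N \<ge> 0"
    proof (rule ccontr)
      assume "\<not> ln N \<ge> 0"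
      then have "20 * real d * ln N < 0" using d1 by (simp add: mult_pos_neg)
      then show False using smallN by simp
    qed
    have "N powr (-\<eta>) = exp (- \<eta> * ln N)" using Npos by (simp add: powr_def)
    also have "\<dots> \<le> (1 - 2 * b) ^ card T"
      by (rule final_numeric[OF b0 adm'(3) d1 adm'(1,2) L smallN])
    finally show ?thesis using lower unfolding N_def by linarith
  qed
qed

end
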